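(* Assume that for each $r\in\mathbb{N}$ the operator $L_r:Lip_d(I)\to Lip_d(I)$ is Lipschitz with Lipschitz constant $|L_r|$, and $|L|:=\sup_{r\in\mathbb{N}}|L_r|<\infty$. Then the non-stationary fractal operator $\mathfrak{F}^\alpha_b:Lip_d(I)\to C(I)$, $\mathfrak{F}^\alpha_b(f)=f^\alpha_b$, is Lipschitz and its Lipschitz constant satisfies $$|\mathfrak{F}^\alpha_b|\le\frac{1+|L|\,\|\alpha\|_\infty}{1-\|\alpha\|_\infty}.$$
   Context: Setting: $I=[x_0,x_N]$ with partition $\Delta: x_0<x_1<\dots<x_N$, $I_i=[x_{i-1},x_i]$, $l_i:I\to I_i$ the increasing affine bijection $l_i(x)=\frac{x_i-x_{i-1}}{x_N-x_0}x+\frac{x_Nx_{i-1}-x_0x_i}{x_N-x_0}$, and $Q_i=l_i^{-1}$. Scaling functions $\alpha_{i,r}:I\to\mathbb{R}$ ($i=1,\dots,N$, $r\in\mathbb{N}$) are continuous with $\|\alpha\|_\infty:=\sup_{r}\max_i\|\alpha_{i,r}\|_\infty<1$. $Lip_d(I)$ ($0<d\le1$) is the space of real functions $g$ on $I$ with $\sup_{x\ne y}|g(x)-g(y)|/|x-y|^d<\infty$, regarded as a subset of $C(I)$ with the supremum norm; Lipschitz properties of operators refer to the supremum norm (an operator $\mathcal{T}$ is Lipschitz if $\|\mathcal{T}u-\mathcal{T}v\|\le q\|u-v\|$ for some $q>0$ and all $u,v$; the best such $q$ is its Lipschitz constant $|\mathcal{T}|$). $L_r:Lip_d(I)\to Lip_d(I)$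 are operators (not necessarily linear) with $(L_rg)(x_0)=g(x_0)$, $(L_rg)(x_N)=g(x_N)$ for all $g$, and $\sup_r\|L_r\|_\infty<\infty$, where $\|L_r\|_\infty=\sup_{g\ne0}\|L_rg\|_\infty/\|g\|_\infty$. Non-stationary $\alpha$-fractal function: for $f\in C(I)$ and base functions $b_r\in C(I)$ with $b_r(x_0)=f(x_0)$, $b_r(x_N)=f(x_N)$, $\sup_r\|b_r\|_\infty<\infty$, let $C_f(I)=\{g\in C(I):g(x_0)=f(x_0),g(x_N)=f(x_N)\}$ and $T^{\alpha_r}:C_f(I)\to C_f(I)$, $(T^{\alpha_r}g)(x)=f(x)+\alpha_{i,r}(Q_i(x))(g-b_r)(Q_i(x))$ for $x\in I_i$. For every $g\in C_f(I)$, $T^{\alpha_1}\circ\cdots\circ T^{\alpha_r}g$ converges uniformly to a function independent of $g$; this is the non-stationary $\alpha$-fractal function. $f^\alpha_b$ denotes it for $f\in Lip_d(I)$ with $b_r=L_rf$. *)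

theory Defs
  imports "HOL-Analysis.Analysis"
begin

definition Ivl :: "(nat \<Rightarrow> real) \<Rightarrow> nat \<Rightarrow> real set" where
  "Ivl xs N = {xs 0 .. xs N}"

text \<open>The affine map l_i : I \<rightarrow> I_i and its inverse Q_i.\<close>
definition lmap :: "(nat \<Rightarrow> real) \<Rightarrow> nat \<Rightarrow> nat \<Rightarrow> real \<Rightarrow> real" where
  "lmap xs N i x = (xs i - xs (i - 1)) / (xs N - xs 0) * x
      + (xs N * xs (i - 1) - xs 0 * xs i) / (xs N - xs 0)"

definition Qmap :: "(nat \<Rightarrow> real) \<Rightarrow> nat \<Rightarrow> nat \<Rightarrow> real \<Rightarrow> real" where
  "Qmap xs N i y = (y - (xs N * xs (i - 1) - xs 0 * xs i) / (xs N - xs 0))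
      / ((xs i - xs (i - 1)) / (xs N - xs 0))"

text \<open>Index of the subinterval I_i = [x_{i-1}, x_i] containing x (the least one;
  at interior nodes both choices give the same value by the join-up conditions).\<close>
definition seg_index :: "(nat \<Rightarrow> real) \<Rightarrow> nat \<Rightarrow> real \<Rightarrow> nat" where
  "seg_index xs N x = (LEAST i. 1 \<le> i \<and> x \<le> xs i)"

definition supn :: "real set \<Rightarrow> (real \<Rightarrow> real) \<Rightarrow> real" where
  "supn I g = Sup ((\<lambda>x. \<bar>g x\<bar>) ` I)"

definition Lipd :: "real \<Rightarrow> real set \<Rightarrow> (real \<Rightarrow> real) set" where
  "Lipd d I = {g. \<exists>C. \<forall>x\<in>I. \<forall>y\<in>I. \<bar>g x - g y\<bar> \<le> C * \<bar>x - y\<bar> powr d}"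

definition op_lipschitz :: "real set \<Rightarrow> (real \<Rightarrow> real) set \<Rightarrow> ((real \<Rightarrow> real) \<Rightarrow> (real \<Rightarrow> real)) \<Rightarrow> bool" where
  "op_lipschitz I D T \<longleftrightarrow> (\<exists>q>0. \<forall>u\<in>D. \<forall>v\<in>D. supn I (\<lambda>x. T u x - T v x) \<le> q * supn I (\<lambda>x. u x - v x))"

definition op_lip_const :: "real set \<Rightarrow> (real \<Rightarrow> real) set \<Rightarrow> ((real \<Rightarrow> real) \<Rightarrow> (real \<Rightarrow> real)) \<Rightarrow> real" where
  "op_lip_const I D T = Inf {q. q > 0 \<and> (\<forall>u\<in>D. \<forall>v\<in>D. supn I (\<lambda>x. T u x - T v x) \<le> q * supn I (\<lambda>x. u x - v x))}"

definition alpha_norm :: "(nat \<Rightarrow> real) \<Rightarrow> nat \<Rightarrow> (nat \<Rightarrow> nat \<Rightarrow> real \<Rightarrow> real) \<Rightarrow> real" where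
  "alpha_norm xs N \<alpha> = Sup {\<bar>\<alpha> i r x\<bar> | i r x. 1 \<le> i \<and> i \<le> N \<and> x \<in> Ivl xs N}"

definition Cf :: "(nat \<Rightarrow> real) \<Rightarrow> nat \<Rightarrow> (real \<Rightarrow> real) \<Rightarrow> (real \<Rightarrow> real) set" where
  "Cf xs N f = {g. continuous_on (Ivl xs N) g \<and> g (xs 0) = f (xs 0) \<and> g (xs N) = f (xs N)}"

definition Top :: "(nat \<Rightarrow> real) \<Rightarrow> nat \<Rightarrow> (nat \<Rightarrow> nat \<Rightarrow> real \<Rightarrow> real) \<Rightarrow> (real \<Rightarrow> real)
    \<Rightarrow> (nat \<Rightarrow> real \<Rightarrow> real) \<Rightarrow> nat \<Rightarrow> (real \<Rightarrow> real) \<Rightarrow> (real \<Rightarrow> real)" where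
  "Top xs N \<alpha> f b r g = (\<lambda>x. let i = seg_index xs N x; y = Qmap xs N i x
      in f x + \<alpha> i r y * (g y - b r y))"

text \<open>Forward composition T^{alpha_1} o ... o T^{alpha_n}
  (the sequence index r = 1,2,... is encoded as r = 0,1,...).\<close>
fun Tcomp :: "(nat \<Rightarrow> real) \<Rightarrow> nat \<Rightarrow> (nat \<Rightarrow> nat \<Rightarrow> real \<Rightarrow> real) \<Rightarrow> (real \<Rightarrow> real)
    \<Rightarrow> (nat \<Rightarrow> real \<Rightarrow> real) \<Rightarrow> nat \<Rightarrow> (real \<Rightarrow> real) \<Rightarrow> (real \<Rightarrow> real)" where
  "Tcomp xs N \<alpha> f b 0 g = g"
| "Tcomp xs N \<alpha> f b (Suc n) g = Tcomp xs N \<alpha> f b n (Top xs N \<alpha> f b n g)"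

text \<open>The non-stationary alpha-fractal function: the common uniform limit on I of the
  compositions, for all starting functions g in C_f(I); normalised to 0 outside I.\<close>
definition ns_fractal :: "(nat \<Rightarrow> real) \<Rightarrow> nat \<Rightarrow> (nat \<Rightarrow> nat \<Rightarrow> real \<Rightarrow> real) \<Rightarrow> (real \<Rightarrow> real)
    \<Rightarrow> (nat \<Rightarrow> real \<Rightarrow> real) \<Rightarrow> (real \<Rightarrow> real)" where
  "ns_fractal xs N \<alpha> f b = (THE \<phi>. (\<forall>x. x \<notin> Ivl xs N \<longrightarrow> \<phi> x = 0) \<and>
      (\<forall>g\<in>Cf xs N f. uniform_limit (Ivl xs N) (\<lambda>n. Tcomp xs N \<alpha> f b n g) \<phi> sequentially))"

definition frac_op :: "(nat \<Rightarrow> real) \<Rightarrow> nat \<Rightarrow> (nat \<Rightarrow> nat \<Rightarrow> real \<Rightarrow> real)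
    \<Rightarrow> (nat \<Rightarrow> (real \<Rightarrow> real) \<Rightarrow> (real \<Rightarrow> real)) \<Rightarrow> (real \<Rightarrow> real) \<Rightarrow> (real \<Rightarrow> real)" where
  "frac_op xs N \<alpha> L f = ns_fractal xs N \<alpha> f (\<lambda>r. L r f)"

end

theory Submission imports Defs begin

lemma xs_mono:
  assumes part: "\<forall>i<N. xs i < xs (Suc i)"
  shows "j < k \<Longrightarrow> k \<le> N \<Longrightarrow> (xs j :: real) < xs k"
proof (induction k)
  case 0 then show ?case by simp
next
  case (Suc k)
  show ?case
  proof (cases "j = k")
    case True then show ?thesis using part Suc by auto
  next
    case False
    then have "xs j < xs k" using Suc by auto
    also have "xs k < xs (Suc k)" using part Suc by auto
    finally show ?thesis .
  qed
qed

lemma xs_le: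
  assumes part: "\<forall>i<N. xs i < xs (Suc i)"
  shows "j \<le> k \<Longrightarrow> k \<le> N \<Longrightarrow> (xs j :: real) \<le> xs k"
  using xs_mono[OF part, of j k] by (cases "j = k") auto

lemma seg:
  assumes N: "1 \<le> N" and part: "\<forall>i<N. xs i < xs (Suc i)" and x: "x \<in> Ivl xs N"
  shows "1 \<le> seg_index xs N x \<and> seg_index xs N x \<le> N \<and> Qmap xs N (seg_index xs N x) x \<in> Ivl xs N"
proof -
  define i where "i = seg_index xs N x"
  have x0: "xs 0 \<le> x" and xN: "x \<le> xs N" using x by (auto simp: Ivl_def)
  have PN: "1 \<le> N \<and> x \<le> xs N" using N xN by auto
  have Pi: "1 \<le> i \<and> x \<le> xs i" unfolding i_def seg_index_def by (rule LeastI[of _ N], rule PN)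
  have iN: "i \<le> N" unfolding i_def seg_index_def by (rule Least_le, rule PN)
  have lo: "xs (i - 1) \<le> x"
  proof (cases "i = 1")
    case True then show ?thesis using x0 by simp
  next
    case False
    then have "i - 1 < i" using Pi by auto
    then have "\<not> (1 \<le> i - 1 \<and> x \<le> xs (i - 1))" unfolding i_def seg_index_def
      by (rule not_less_Least)
    then show ?thesis using False Pi by auto
  qed
  have lt: "xs (i - 1) < xs i" using xs_mono[OF part, of "i - 1" i] Pi iN by auto
  have D: "xs 0 < xs N" using xs_mono[OF part, of 0 N] N by auto
  have a: "xs 0 \<le> xs (i - 1)" using xs_le[OF part, of 0 "i - 1"] iN by auto
  have b: "xs i \<le> xs N" using xs_le[OF part, of i N] iN by auto
  define D' where "D' = xs N - xs 0"
  define s where "s = xs i - xs (i - 1)"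
  have D'p: "D' > 0" using D D'_def by auto
  have sp: "s > 0" using lt s_def by auto
  have Q: "Qmap xs N i x = (x * D' - (xs N * xs (i - 1) - xs 0 * xs i)) / s"
    unfolding Qmap_def D'_def[symmetric] s_def[symmetric] using D'p sp
    by (simp add: field_simps)
  have "xs 0 * s \<le> x * D' - (xs N * xs (i - 1) - xs 0 * xs i)"
  proof -
    have "xs 0 * s - (x * D' - (xs N * xs (i - 1) - xs 0 * xs i)) = (xs (i - 1) - x) * D'"
      unfolding s_def D'_def by algebra
    also have "\<dots> \<le> 0" using lo D'p by (simp add: mult_nonpos_nonneg)
    finally show ?thesis by simp
  qed
  then have q0: "xs 0 \<le> Qmap xs N i x" unfolding Q using sp by (simp add: pos_le_divide_eq)
  have "x * D' - (xs N * xs (i - 1) - xs 0 * xs i) \<le> xs N * s"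
  proof -
    have "(x * D' - (xs N * xs (i - 1) - xs 0 * xs i)) - xs N * s = (x - xs i) * D'"
      unfolding s_def D'_def by algebra
    also have "\<dots> \<le> 0" using Pi D'p by (simp add: mult_nonpos_nonneg)
    finally show ?thesis by simp
  qed
  then have q1: "Qmap xs N i x \<le> xs N" unfolding Q using sp by (simp add: pos_divide_le_eq)
  show ?thesis using Pi iN q0 q1 unfolding i_def[symmetric] by (auto simp: Ivl_def)
qed



lemma lipd_cont:
  assumes d: "0 < d" and g: "g \<in> Lipd d S"
  shows "continuous_on S g"
proof -
  obtain C where C: "\<forall>x\<in>S. \<forall>y\<in>S. \<bar>g x - g y\<bar> \<le> C * \<bar>x - y\<bar> powr d"
    using g unfolding Lipd_def by blast
  show ?thesis unfolding continuous_on_iff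
  proof (intro ballI allI impI)
    fix x e :: real assume x: "x \<in> S" and e: "0 < e"
    define K where "K = \<bar>C\<bar> + 1"
    have K: "K > 0" unfolding K_def by simp
    define \<delta> where "\<delta> = (e / K) powr (1 / d)"
    have \<delta>: "\<delta> > 0" unfolding \<delta>_def using e K by simp
    have \<delta>d: "\<delta> powr d = e / K" unfolding \<delta>_def using e K d by (simp add: powr_powr)
    show "\<exists>\<delta>>0. \<forall>x'\<in>S. dist x' x < \<delta> \<longrightarrow> dist (g x') (g x) < e"
    proof (intro exI[of _ \<delta>] conjI ballI impI \<delta>)
      fix y assume y: "y \<in> S" and dy: "dist y x < \<delta>"
      have t: "\<bar>y - x\<bar> powr d < e / K"
        using powr_less_mono2[OF d _ dy[unfolded dist_real_def]] \<delta>d by simp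
      have t0: "0 \<le> \<bar>y - x\<bar> powr d" by simp
      have "\<bar>g y - g x\<bar> \<le> C * \<bar>y - x\<bar> powr d" using C x y by auto
      also have "\<dots> \<le> K * \<bar>y - x\<bar> powr d" unfolding K_def using t0
        by (intro mult_right_mono) auto
      also have "\<dots> < K * (e / K)" using t K by (intro mult_strict_left_mono) auto
      also have "\<dots> = e" using K by simp
      finally show "dist (g y) (g x) < e" by (simp add: dist_real_def)
    qed
  qed
qed

lemma supn_upper:
  assumes "\<forall>y\<in>I. \<bar>g y\<bar> \<le> (G::real)" "x \<in> I"
  shows "\<bar>g x\<bar> \<le> supn I g"
  unfolding supn_def using assms by (intro cSup_upper) (auto intro!: bdd_aboveI2)

lemma supn_least:
  assumes "I \<noteq> {}" "\<forall>x\<in>I. \<bar>g x\<bar> \<le> c"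
  shows "supn I g \<le> c"
  unfolding supn_def using assms by (intro cSup_least) auto

lemma supn_nonneg:
  assumes "\<forall>y\<in>I. \<bar>g y\<bar> \<le> (G::real)" "x \<in> I"
  shows "0 \<le> supn I g"
  using supn_upper[OF assms] by linarith


lemma oplip_nonneg:
  assumes lip: "op_lipschitz I D T"
  shows "0 \<le> op_lip_const I D T"
  using lip unfolding op_lip_const_def op_lipschitz_def
  by (intro cInf_greatest) auto

lemma oplip_bound:
  assumes lip: "op_lipschitz I D T" and u: "u \<in> D" and v: "v \<in> D"
    and nn: "0 \<le> supn I (\<lambda>x. u x - v x)"
  shows "supn I (\<lambda>x. T u x - T v x) \<le> op_lip_const I D T * supn I (\<lambda>x. u x - v x)"
proof -
  define S where "S = {q. q > 0 \<and> (\<forall>u\<in>D. \<forall>v\<in>D. supn I (\<lambda>x. T u x - T v x) \<le> q * supn I (\<lambda>x. u x - v x))}"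
  have Sne: "S \<noteq> {}" using lip unfolding op_lipschitz_def S_def by auto
  have L: "op_lip_const I D T = Inf S" unfolding op_lip_const_def S_def ..
  have qS: "supn I (\<lambda>x. T u x - T v x) \<le> q * supn I (\<lambda>x. u x - v x)" if "q \<in> S" for q
    using that u v unfolding S_def by auto
  show ?thesis
  proof (cases "supn I (\<lambda>x. u x - v x) = 0")
    case True
    obtain q where "q \<in> S" using Sne by auto
    from qS[OF this] True show ?thesis by simp
  next
    case False
    then have p: "supn I (\<lambda>x. u x - v x) > 0" using nn by auto
    have "supn I (\<lambda>x. T u x - T v x) / supn I (\<lambda>x. u x - v x) \<le> Inf S"
    proof (rule cInf_greatest[OF Sne])
      fix q assume "q \<in> S"
      from qS[OF this] p show "supn I (\<lambda>x. T u x - T v x) / supn I (\<lambda>x. u x - v x) \<le> q"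
        by (simp add: divide_le_eq)
    qed
    then show ?thesis unfolding L using p by (simp add: divide_le_eq)
  qed
qed

lemma cont_bnd:
  assumes "continuous_on (Ivl xs N) g"
  shows "\<exists>G. \<forall>y\<in>Ivl xs N. \<bar>g y\<bar> \<le> (G::real)"
proof -
  have "compact (g ` Ivl xs N)" unfolding Ivl_def
    by (rule compact_continuous_image[OF assms[unfolded Ivl_def] compact_Icc])
  then have "bounded (g ` Ivl xs N)" by (rule compact_imp_bounded)
  then show ?thesis unfolding bounded_iff by auto
qed

locale fsetup =
  fixes xs :: "nat \<Rightarrow> real" and N :: nat and \<alpha> :: "nat \<Rightarrow> nat \<Rightarrow> real \<Rightarrow> real" and a :: real
  assumes N: "1 \<le> N" and part: "\<forall>i<N. xs i < xs (Suc i)"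
    and abnd: "\<And>i r y. 1 \<le> i \<Longrightarrow> i \<le> N \<Longrightarrow> y \<in> Ivl xs N \<Longrightarrow> \<bar>\<alpha> i r y\<bar> \<le> a"
    and a0: "0 \<le> a" and a1: "a < 1"
begin

lemma Top_diff:
  assumes x: "x \<in> Ivl xs N"
    and uv: "\<forall>y\<in>Ivl xs N. \<bar>u y - v y\<bar> \<le> c"
    and ff: "\<forall>y\<in>Ivl xs N. \<bar>f1 y - f2 y\<bar> \<le> e"
    and bb: "\<forall>y\<in>Ivl xs N. \<bar>b1 r y - b2 r y\<bar> \<le> e'"
  shows "\<bar>Top xs N \<alpha> f1 b1 r u x - Top xs N \<alpha> f2 b2 r v x\<bar> \<le> e + a * (c + e')"
proof -
  define i where "i = seg_index xs N x"
  define y where "y = Qmap xs N i x"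
  have S: "1 \<le> i" "i \<le> N" "y \<in> Ivl xs N" using seg[OF N part x] unfolding i_def y_def by auto
  have al: "\<bar>\<alpha> i r y\<bar> \<le> a" using abnd S by auto
  have eq: "Top xs N \<alpha> f1 b1 r u x - Top xs N \<alpha> f2 b2 r v x
      = (f1 x - f2 x) + \<alpha> i r y * ((u y - v y) - (b1 r y - b2 r y))"
    unfolding Top_def Let_def i_def[symmetric] y_def[symmetric] by algebra
  have w: "\<bar>(u y - v y) - (b1 r y - b2 r y)\<bar> \<le> c + e'"
    using uv bb S(3) by (smt (verit, best))
  have "\<bar>\<alpha> i r y * ((u y - v y) - (b1 r y - b2 r y))\<bar> \<le> a * (c + e')"
    unfolding abs_mult by (rule mult_mono[OF al w a0 abs_ge_zero])
  moreover have "\<bar>f1 x - f2 x\<bar> \<le> e" using ff x by auto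
  ultimately show ?thesis unfolding eq by linarith
qed

lemma Tcomp_diff:
  assumes ff: "\<forall>y\<in>Ivl xs N. \<bar>f1 y - f2 y\<bar> \<le> e"
    and bb: "\<forall>r. \<forall>y\<in>Ivl xs N. \<bar>b1 r y - b2 r y\<bar> \<le> e'"
  shows "\<forall>u v c. (\<forall>y\<in>Ivl xs N. \<bar>u y - v y\<bar> \<le> c) \<longrightarrow> (\<forall>x\<in>Ivl xs N.
     \<bar>Tcomp xs N \<alpha> f1 b1 n u x - Tcomp xs N \<alpha> f2 b2 n v x\<bar> \<le> (e + a * e') / (1 - a) * (1 - a ^ n) + a ^ n * c)"
proof (induction n)
  case 0 then show ?case by simp
next
  case (Suc n)
  show ?case
  proof (intro allI impI ballI)
    fix u v :: "real \<Rightarrow> real" and c x :: real assume uv: "\<forall>y\<in>Ivl xs N. \<bar>u y - v y\<bar> \<le> c" and x: "x \<in> Ivl xs N"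
    have T: "\<forall>y\<in>Ivl xs N. \<bar>Top xs N \<alpha> f1 b1 n u y - Top xs N \<alpha> f2 b2 n v y\<bar> \<le> (e + a * e') + a * c"
    proof
      fix y assume y: "y \<in> Ivl xs N"
      have "\<forall>z\<in>Ivl xs N. \<bar>b1 n z - b2 n z\<bar> \<le> e'" using bb by auto
      from Top_diff[of y u v c f1 f2 e b1 n b2 e', OF y uv ff this] show "\<bar>Top xs N \<alpha> f1 b1 n u y - Top xs N \<alpha> f2 b2 n v y\<bar> \<le> (e + a * e') + a * c"
        by (simp add: algebra_simps)
    qed
    have "\<bar>Tcomp xs N \<alpha> f1 b1 (Suc n) u x - Tcomp xs N \<alpha> f2 b2 (Suc n) v x\<bar>
      \<le> (e + a * e') / (1 - a) * (1 - a ^ n) + a ^ n * ((e + a * e') + a * c)"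
      using Suc.IH T x by simp
    also have "\<dots> = (e + a * e') / (1 - a) * (1 - a ^ Suc n) + a ^ Suc n * c"
      using a1 by (simp add: field_simps)
    finally show "\<bar>Tcomp xs N \<alpha> f1 b1 (Suc n) u x - Tcomp xs N \<alpha> f2 b2 (Suc n) v x\<bar>
      \<le> (e + a * e') / (1 - a) * (1 - a ^ Suc n) + a ^ Suc n * c" .
  qed
qed

lemma Tcomp_contr:
  assumes "\<forall>y\<in>Ivl xs N. \<bar>u y - v y\<bar> \<le> c" "x \<in> Ivl xs N"
  shows "\<bar>Tcomp xs N \<alpha> f b n u x - Tcomp xs N \<alpha> f b n v x\<bar> \<le> a ^ n * c"
  using Tcomp_diff[of f f 0 b b 0 n] assms by simp


lemma Top_bound:
  assumes fb: "\<forall>y\<in>Ivl xs N. \<bar>f y\<bar> \<le> F" and bb: "\<forall>r. \<forall>y\<in>Ivl xs N. \<bar>b r y\<bar> \<le> B"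
    and gb: "\<forall>y\<in>Ivl xs N. \<bar>g y\<bar> \<le> G" and x: "x \<in> Ivl xs N"
  shows "\<bar>Top xs N \<alpha> f b n g x - g x\<bar> \<le> F + a * (G + B) + G"
proof -
  define i where "i = seg_index xs N x"
  define y where "y = Qmap xs N i x"
  have S: "1 \<le> i" "i \<le> N" "y \<in> Ivl xs N" using seg[OF N part x] unfolding i_def y_def by auto
  have al: "\<bar>\<alpha> i n y\<bar> \<le> a" using abnd S by auto
  have eq: "Top xs N \<alpha> f b n g x - g x = f x + \<alpha> i n y * (g y - b n y) - g x"
    unfolding Top_def Let_def i_def[symmetric] y_def[symmetric] by simp
  have "\<bar>g y\<bar> \<le> G" "\<bar>b n y\<bar> \<le> B" using gb bb S(3) by auto
  then have w: "\<bar>g y - b n y\<bar> \<le> G + B" by linarith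
  have "\<bar>\<alpha> i n y * (g y - b n y)\<bar> \<le> a * (G + B)"
    unfolding abs_mult by (rule mult_mono[OF al w a0 abs_ge_zero])
  moreover have "\<bar>f x\<bar> \<le> F" "\<bar>g x\<bar> \<le> G" using fb gb x by auto
  ultimately show ?thesis unfolding eq by linarith
qed

lemma x0I: "xs 0 \<in> Ivl xs N"
  using xs_le[OF part, of 0 N] by (auto simp: Ivl_def)

lemma Tcomp_conv:
  assumes fb: "\<forall>y\<in>Ivl xs N. \<bar>f y\<bar> \<le> F" and bb: "\<forall>r. \<forall>y\<in>Ivl xs N. \<bar>b r y\<bar> \<le> B"
    and gb: "\<forall>y\<in>Ivl xs N. \<bar>g y\<bar> \<le> G"
  shows "uniformly_convergent_on (Ivl xs N) (\<lambda>n. Tcomp xs N \<alpha> f b n g)"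
proof -
  define C where "C = F + a * (G + B) + G"
  have "\<bar>f (xs 0)\<bar> \<le> F" "\<bar>g (xs 0)\<bar> \<le> G" "\<bar>b 0 (xs 0)\<bar> \<le> B" using fb gb bb x0I by auto
  then have C0: "C \<ge> 0" unfolding C_def using a0 by simp
  have step: "\<bar>Tcomp xs N \<alpha> f b (Suc n) g x - Tcomp xs N \<alpha> f b n g x\<bar> \<le> a ^ n * C"
    if x: "x \<in> Ivl xs N" for n x
  proof -
    have "\<forall>y\<in>Ivl xs N. \<bar>Top xs N \<alpha> f b n g y - g y\<bar> \<le> C"
      using Top_bound[OF fb bb gb] unfolding C_def by auto
    from Tcomp_contr[OF this x, of f b n] show ?thesis by simp
  qed
  have cum: "\<bar>Tcomp xs N \<alpha> f b (n + k) g x - Tcomp xs N \<alpha> f b n g x\<bar> \<le> C * (a ^ n - a ^ (n + k)) / (1 - a)"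
    if x: "x \<in> Ivl xs N" for n k x
  proof (induction k)
    case 0 then show ?case by simp
  next
    case (Suc k)
    have "\<bar>Tcomp xs N \<alpha> f b (n + Suc k) g x - Tcomp xs N \<alpha> f b n g x\<bar>
       \<le> \<bar>Tcomp xs N \<alpha> f b (Suc (n + k)) g x - Tcomp xs N \<alpha> f b (n + k) g x\<bar>
         + \<bar>Tcomp xs N \<alpha> f b (n + k) g x - Tcomp xs N \<alpha> f b n g x\<bar>" by simp
    also have "\<dots> \<le> a ^ (n + k) * C + C * (a ^ n - a ^ (n + k)) / (1 - a)"
      using step[OF x, of "n + k"] Suc.IH by linarith
    also have "\<dots> = C * (a ^ n - a ^ (n + Suc k)) / (1 - a)"
      using a1 by (simp add: field_simps)
    finally show ?case .
  qed
  have bnd: "\<bar>Tcomp xs N \<alpha> f b m g x - Tcomp xs N \<alpha> f b n g x\<bar> \<le> C * a ^ n / (1 - a)"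
    if x: "x \<in> Ivl xs N" and nm: "n \<le> m" for n m x
  proof -
    have "\<bar>Tcomp xs N \<alpha> f b m g x - Tcomp xs N \<alpha> f b n g x\<bar> \<le> C * (a ^ n - a ^ (n + (m - n))) / (1 - a)"
      using cum[OF x, of n "m - n"] nm by simp
    also have "\<dots> \<le> C * a ^ n / (1 - a)"
      using a0 a1 C0 by (intro divide_right_mono mult_left_mono) auto
    finally show ?thesis .
  qed
  have lim: "(\<lambda>n. C * a ^ n / (1 - a)) \<longlonglongrightarrow> C * 0 / (1 - a)"
    using a0 a1 by (intro tendsto_intros LIMSEQ_power_zero) auto
  show ?thesis
  proof (rule Cauchy_uniformly_convergent, rule uniformly_Cauchy_onI')
    fix e :: real assume e: "e > 0"
    from lim e have "eventually (\<lambda>n. C * a ^ n / (1 - a) < e) sequentially"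
      by (auto dest: order_tendstoD(2))
    then obtain M where M: "\<And>n. n \<ge> M \<Longrightarrow> C * a ^ n / (1 - a) < e"
      unfolding eventually_sequentially by blast
    show "\<exists>M. \<forall>x\<in>Ivl xs N. \<forall>m\<ge>M. \<forall>n>m. dist (Tcomp xs N \<alpha> f b m g x) (Tcomp xs N \<alpha> f b n g x) < e"
    proof (intro exI[of _ M] ballI allI impI)
      fix x m n assume x: "x \<in> Ivl xs N" and m: "M \<le> m" and n: "m < n"
      have "dist (Tcomp xs N \<alpha> f b m g x) (Tcomp xs N \<alpha> f b n g x) \<le> C * a ^ m / (1 - a)"
        using bnd[OF x, of m n] n by (simp add: dist_real_def)
      also have "\<dots> < e" using M m by auto
      finally show "dist (Tcomp xs N \<alpha> f b m g x) (Tcomp xs N \<alpha> f b n g x) < e" .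
    qed
  qed
qed


lemma Tcomp_same_limit:
  assumes ul: "uniform_limit (Ivl xs N) (\<lambda>n. Tcomp xs N \<alpha> f b n g1) \<phi> sequentially"
    and c: "\<forall>y\<in>Ivl xs N. \<bar>g2 y - g1 y\<bar> \<le> c"
  shows "uniform_limit (Ivl xs N) (\<lambda>n. Tcomp xs N \<alpha> f b n g2) \<phi> sequentially"
proof (rule uniform_limitI)
  fix e :: real assume e: "e > 0"
  have lim: "(\<lambda>n. a ^ n * c) \<longlonglongrightarrow> 0 * c"
    using a0 a1 by (intro tendsto_intros LIMSEQ_power_zero) auto
  have ev1: "eventually (\<lambda>n. a ^ n * c < e / 2) sequentially"
    using order_tendstoD(2)[OF lim, of "e/2"] e by simp
  have ev2: "eventually (\<lambda>n. \<forall>x\<in>Ivl xs N. dist (Tcomp xs N \<alpha> f b n g1 x) (\<phi> x) < e / 2) sequentially"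
    using uniform_limitD[OF ul, of "e/2"] e by linarith
  show "eventually (\<lambda>n. \<forall>x\<in>Ivl xs N. dist (Tcomp xs N \<alpha> f b n g2 x) (\<phi> x) < e) sequentially"
    using ev1 ev2
  proof eventually_elim
    case (elim n)
    show ?case
    proof
      fix x assume x: "x \<in> Ivl xs N"
      have h1: "\<bar>Tcomp xs N \<alpha> f b n g2 x - Tcomp xs N \<alpha> f b n g1 x\<bar> \<le> a ^ n * c"
        by (rule Tcomp_contr[OF c x])
      have h2: "dist (Tcomp xs N \<alpha> f b n g1 x) (\<phi> x) < e / 2" using elim x by auto
      show "dist (Tcomp xs N \<alpha> f b n g2 x) (\<phi> x) < e"
      proof -
        let ?A = "Tcomp xs N \<alpha> f b n g2 x" and ?B = "Tcomp xs N \<alpha> f b n g1 x"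
        have "\<bar>?A - \<phi> x\<bar> \<le> \<bar>?A - ?B\<bar> + \<bar>?B - \<phi> x\<bar>" by linarith
        then show ?thesis using h1 h2 elim by (simp add: dist_real_def)
      qed
    qed
  qed
qed

lemma ns_fractal_limit:
  assumes fb: "\<forall>y\<in>Ivl xs N. \<bar>f y\<bar> \<le> F" and bb: "\<forall>r. \<forall>y\<in>Ivl xs N. \<bar>b r y\<bar> \<le> B"
    and g0: "g0 \<in> Cf xs N f"
  shows "uniform_limit (Ivl xs N) (\<lambda>n. Tcomp xs N \<alpha> f b n g0) (ns_fractal xs N \<alpha> f b) sequentially"
proof -
  define \<phi> where "\<phi> x = (if x \<in> Ivl xs N then lim (\<lambda>n. Tcomp xs N \<alpha> f b n g0 x) else 0)" for x
  have cb: "\<exists>G. \<forall>y\<in>Ivl xs N. \<bar>g y\<bar> \<le> G" if "g \<in> Cf xs N f" for g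
    using that cont_bnd unfolding Cf_def by blast
  obtain G0 where G0: "\<forall>y\<in>Ivl xs N. \<bar>g0 y\<bar> \<le> G0" using cb[OF g0] by blast
  have "uniformly_convergent_on (Ivl xs N) (\<lambda>n. Tcomp xs N \<alpha> f b n g0)"
    by (rule Tcomp_conv[OF fb bb G0])
  then have ul0: "uniform_limit (Ivl xs N) (\<lambda>n. Tcomp xs N \<alpha> f b n g0) \<phi> sequentially"
    unfolding uniformly_convergent_uniform_limit_iff
    by (subst uniform_limit_cong'[where i = "\<lambda>x. lim (\<lambda>n. Tcomp xs N \<alpha> f b n g0 x)"]) (auto simp: \<phi>_def)
  have P: "(\<forall>x. x \<notin> Ivl xs N \<longrightarrow> \<phi> x = 0) \<and>
      (\<forall>g\<in>Cf xs N f. uniform_limit (Ivl xs N) (\<lambda>n. Tcomp xs N \<alpha> f b n g) \<phi> sequentially)"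
  proof (intro conjI allI impI ballI)
    fix x assume "x \<notin> Ivl xs N" then show "\<phi> x = 0" by (simp add: \<phi>_def)
  next
    fix g assume g: "g \<in> Cf xs N f"
    obtain G where G: "\<forall>y\<in>Ivl xs N. \<bar>g y\<bar> \<le> G" using cb[OF g] by blast
    have "\<forall>y\<in>Ivl xs N. \<bar>g y - g0 y\<bar> \<le> G + G0" using G G0 by (auto simp: abs_diff_le_iff) (smt (verit))+
    then show "uniform_limit (Ivl xs N) (\<lambda>n. Tcomp xs N \<alpha> f b n g) \<phi> sequentially"
      by (rule Tcomp_same_limit[OF ul0])
  qed
  have "ns_fractal xs N \<alpha> f b = \<phi>"
    unfolding ns_fractal_def
  proof (rule the_equality)
    show "(\<forall>x. x \<notin> Ivl xs N \<longrightarrow> \<phi> x = 0) \<and>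
      (\<forall>g\<in>Cf xs N f. uniform_limit (Ivl xs N) (\<lambda>n. Tcomp xs N \<alpha> f b n g) \<phi> sequentially)" by (rule P)
  next
    fix \<psi> assume Q: "(\<forall>x. x \<notin> Ivl xs N \<longrightarrow> \<psi> x = 0) \<and>
      (\<forall>g\<in>Cf xs N f. uniform_limit (Ivl xs N) (\<lambda>n. Tcomp xs N \<alpha> f b n g) \<psi> sequentially)"
    show "\<psi> = \<phi>"
    proof
      fix x show "\<psi> x = \<phi> x"
      proof (cases "x \<in> Ivl xs N")
        case True
        have u: "uniform_limit (Ivl xs N) (\<lambda>n. Tcomp xs N \<alpha> f b n g0) \<psi> sequentially" using Q g0 by auto
        show ?thesis
          by (rule tendsto_unique[OF _ tendsto_uniform_limitI[OF u True] tendsto_uniform_limitI[OF ul0 True]]) simp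
      next
        case False then show ?thesis using Q P by auto
      qed
    qed
  qed
  then show ?thesis using ul0 by simp
qed

end

theorem mainTheorem4:
  fixes xs :: "nat \<Rightarrow> real" and N :: nat and d :: real
    and \<alpha> :: "nat \<Rightarrow> nat \<Rightarrow> real \<Rightarrow> real"
    and L :: "nat \<Rightarrow> (real \<Rightarrow> real) \<Rightarrow> (real \<Rightarrow> real)"
  assumes N: "1 \<le> N"
    and part: "\<forall>i<N. xs i < xs (Suc i)"
    and d: "0 < d" "d \<le> 1"
    and alpha_cont: "\<forall>i r. 1 \<le> i \<and> i \<le> N \<longrightarrow> continuous_on (Ivl xs N) (\<alpha> i r)"
    and alpha_bdd: "bdd_above {\<bar>\<alpha> i r x\<bar> | i r x. 1 \<le> i \<and> i \<le> N \<and> x \<in> Ivl xs N}"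
    and alpha_lt1: "alpha_norm xs N \<alpha> < 1"
    and L_maps: "\<forall>r. \<forall>g\<in>Lipd d (Ivl xs N). L r g \<in> Lipd d (Ivl xs N)"
    and L_ends: "\<forall>r. \<forall>g\<in>Lipd d (Ivl xs N). L r g (xs 0) = g (xs 0) \<and> L r g (xs N) = g (xs N)"
    and L_opnorm: "\<exists>M. \<forall>r. \<forall>g\<in>Lipd d (Ivl xs N). supn (Ivl xs N) (L r g) \<le> M * supn (Ivl xs N) g"
    and L_lip: "\<forall>r. op_lipschitz (Ivl xs N) (Lipd d (Ivl xs N)) (L r)"
    and L_lip_bdd: "bdd_above (range (\<lambda>r. op_lip_const (Ivl xs N) (Lipd d (Ivl xs N)) (L r)))"
  shows "op_lipschitz (Ivl xs N) (Lipd d (Ivl xs N)) (frac_op xs N \<alpha> L)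
    \<and> op_lip_const (Ivl xs N) (Lipd d (Ivl xs N)) (frac_op xs N \<alpha> L)
        \<le> (1 + (SUP r. op_lip_const (Ivl xs N) (Lipd d (Ivl xs N)) (L r)) * alpha_norm xs N \<alpha>)
           / (1 - alpha_norm xs N \<alpha>)"
proof -
  define I where "I = Ivl xs N"
  define D where "D = Lipd d (Ivl xs N)"
  define a where "a = alpha_norm xs N \<alpha>"
  define LL where "LL = (SUP r. op_lip_const (Ivl xs N) (Lipd d (Ivl xs N)) (L r))"
  have x0: "xs 0 \<in> I" using xs_le[OF part, of 0 N] unfolding I_def by (auto simp: Ivl_def)
  have Ine: "I \<noteq> {}" using x0 by auto
  have abnd: "\<bar>\<alpha> i r y\<bar> \<le> a" if "1 \<le> i" "i \<le> N" "y \<in> Ivl xs N" for i r y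
    unfolding a_def alpha_norm_def using that by (intro cSup_upper[OF _ alpha_bdd]) auto
  have a0: "0 \<le> a" using abnd[where i=1 and r=0 and y="xs 0"] N x0 unfolding I_def by auto
  have a1: "a < 1" using alpha_lt1 unfolding a_def .
  interpret fsetup xs N \<alpha> a using N part abnd a0 a1 by unfold_locales auto
  have cont: "continuous_on I g" if "g \<in> D" for g
    using lipd_cont[OF d(1)] that unfolding D_def I_def by blast
  have Lr: "L r g \<in> D" if "g \<in> D" for r g using L_maps that unfolding D_def by blast
  have Lc0: "0 \<le> op_lip_const I D (L r)" for r
    using oplip_nonneg L_lip unfolding I_def D_def by blast
  have LcLL: "op_lip_const I D (L r) \<le> LL" for r
    unfolding LL_def I_def D_def by (rule cSUP_upper[OF _ L_lip_bdd]) auto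
  have LL0: "0 \<le> LL" using Lc0[of 0] LcLL[of 0] by linarith
  obtain M where M: "\<forall>r. \<forall>g\<in>D. supn I (L r g) \<le> M * supn I g"
    using L_opnorm unfolding I_def D_def by blast
  define K where "K = (1 + LL * a) / (1 - a)"
  have K0: "K > 0" unfolding K_def using a0 a1 LL0 by (intro divide_pos_pos add_pos_nonneg mult_nonneg_nonneg) auto
  have main: "supn I (\<lambda>x. frac_op xs N \<alpha> L f x - frac_op xs N \<alpha> L h x) \<le> K * supn I (\<lambda>x. f x - h x)"
    if f: "f \<in> D" and h: "h \<in> D" for f h
  proof -
    define e where "e = supn I (\<lambda>x. f x - h x)"
    have cfh: "continuous_on I (\<lambda>x. f x - h x)" using cont[OF f] cont[OF h] by (intro continuous_intros)
    obtain G where G: "\<forall>y\<in>I. \<bar>f y - h y\<bar> \<le> G" using cont_bnd[OF cfh[unfolded I_def]] unfolding I_def by blast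
    have ef: "\<forall>y\<in>I. \<bar>f y - h y\<bar> \<le> e" unfolding e_def using supn_upper[OF G] by blast
    have e0: "0 \<le> e" unfolding e_def using supn_nonneg[OF G x0] .
    have eb: "\<forall>r. \<forall>y\<in>I. \<bar>L r f y - L r h y\<bar> \<le> LL * e"
    proof (intro allI ballI)
      fix r y assume y: "y \<in> I"
      have c2: "continuous_on I (\<lambda>x. L r f x - L r h x)" using cont[OF Lr[OF f]] cont[OF Lr[OF h]]
        by (intro continuous_intros)
      obtain G2 where G2: "\<forall>y\<in>I. \<bar>L r f y - L r h y\<bar> \<le> G2"
        using cont_bnd[OF c2[unfolded I_def]] unfolding I_def by blast
      have "\<bar>L r f y - L r h y\<bar> \<le> supn I (\<lambda>x. L r f x - L r h x)" using supn_upper[OF G2 y] .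
      also have "\<dots> \<le> op_lip_const I D (L r) * e" unfolding e_def
        using oplip_bound[of I D "L r" f h] L_lip f h e0 unfolding I_def D_def e_def by blast
      also have "\<dots> \<le> LL * e" using LcLL e0 by (intro mult_right_mono) auto
      finally show "\<bar>L r f y - L r h y\<bar> \<le> LL * e" .
    qed
    have bnd: "\<exists>F B. (\<forall>y\<in>I. \<bar>g y\<bar> \<le> F) \<and> (\<forall>r. \<forall>y\<in>I. \<bar>L r g y\<bar> \<le> B)" if g: "g \<in> D" for g
    proof -
      obtain F where F: "\<forall>y\<in>I. \<bar>g y\<bar> \<le> F" using cont_bnd[OF cont[OF g, unfolded I_def]] unfolding I_def by blast
      have "\<forall>r. \<forall>y\<in>I. \<bar>L r g y\<bar> \<le> M * supn I g"
      proof (intro allI ballI)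
        fix r y assume y: "y \<in> I"
        obtain G3 where G3: "\<forall>y\<in>I. \<bar>L r g y\<bar> \<le> G3"
          using cont_bnd[OF cont[OF Lr[OF g], unfolded I_def]] unfolding I_def by blast
        have "supn I (L r g) \<le> M * supn I g" using M g by blast
        then show "\<bar>L r g y\<bar> \<le> M * supn I g" using supn_upper[OF G3 y] by linarith
      qed
      then show ?thesis using F by blast
    qed
    have inCf: "g \<in> Cf xs N g" if "g \<in> D" for g using cont[OF that] unfolding Cf_def I_def by auto
    have lim: "uniform_limit I (\<lambda>n. Tcomp xs N \<alpha> g (\<lambda>r. L r g) n g) (frac_op xs N \<alpha> L g) sequentially"
      if g: "g \<in> D" for g
    proof -
      obtain F B where "\<forall>y\<in>I. \<bar>g y\<bar> \<le> F" "\<forall>r. \<forall>y\<in>I. \<bar>L r g y\<bar> \<le> B" using bnd[OF g] by blast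
      from ns_fractal_limit[of g F "\<lambda>r. L r g" B g] this inCf[OF g] show ?thesis
        unfolding frac_op_def I_def by auto
    qed
    have pt: "\<bar>frac_op xs N \<alpha> L f x - frac_op xs N \<alpha> L h x\<bar> \<le> K * e" if x: "x \<in> I" for x
    proof -
      have T1: "(\<lambda>n. \<bar>Tcomp xs N \<alpha> f (\<lambda>r. L r f) n f x - Tcomp xs N \<alpha> h (\<lambda>r. L r h) n h x\<bar>)
          \<longlonglongrightarrow> \<bar>frac_op xs N \<alpha> L f x - frac_op xs N \<alpha> L h x\<bar>"
        by (intro tendsto_intros tendsto_uniform_limitI[OF lim[OF f] x] tendsto_uniform_limitI[OF lim[OF h] x])
      have T2: "(\<lambda>n. (e + a * (LL * e)) / (1 - a) * (1 - a ^ n) + a ^ n * e)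
          \<longlonglongrightarrow> (e + a * (LL * e)) / (1 - a) * (1 - 0) + 0 * e"
        using a0 a1 by (intro tendsto_intros LIMSEQ_power_zero) auto
      have le: "\<bar>Tcomp xs N \<alpha> f (\<lambda>r. L r f) n f x - Tcomp xs N \<alpha> h (\<lambda>r. L r h) n h x\<bar>
          \<le> (e + a * (LL * e)) / (1 - a) * (1 - a ^ n) + a ^ n * e" for n
        using Tcomp_diff[of f h e "\<lambda>r. L r f" "\<lambda>r. L r h" "LL * e" n] ef eb x unfolding I_def by auto
      have "\<bar>frac_op xs N \<alpha> L f x - frac_op xs N \<alpha> L h x\<bar> \<le> (e + a * (LL * e)) / (1 - a) * (1 - 0) + 0 * e"
        by (rule LIMSEQ_le[OF T1 T2]) (use le in auto)
      also have "\<dots> = K * e" unfolding K_def by (simp add: field_simps)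
      finally show ?thesis .
    qed
    show ?thesis unfolding e_def[symmetric] by (rule supn_least[OF Ine]) (use pt in auto)
  qed
  have op: "op_lipschitz I D (frac_op xs N \<alpha> L)"
    unfolding op_lipschitz_def using K0 main by blast
  have "op_lip_const I D (frac_op xs N \<alpha> L) \<le> K"
    unfolding op_lip_const_def
  proof (rule cInf_lower)
    show "K \<in> {q. 0 < q \<and> (\<forall>u\<in>D. \<forall>v\<in>D. supn I (\<lambda>x. frac_op xs N \<alpha> L u x - frac_op xs N \<alpha> L v x)
        \<le> q * supn I (\<lambda>x. u x - v x))}" using K0 main by blast
    show "bdd_below {q. 0 < q \<and> (\<forall>u\<in>D. \<forall>v\<in>D. supn I (\<lambda>x. frac_op xs N \<alpha> L u x - frac_op xs N \<alpha> L v x)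
        \<le> q * supn I (\<lambda>x. u x - v x))}" by (rule bdd_belowI[of _ 0]) auto
  qed
  then show ?thesis using op unfolding K_def LL_def a_def I_def D_def by simp
qed

end
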